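(* Let $p\geq 1$, let $\boldsymbol \Omega$ be a $p\times p$ positive definite matrix and $0 < c < 1/2$. Let $\boldsymbol \beta = \boldsymbol s \circ \boldsymbol z$ where $\boldsymbol z \sim \text{normal}(\boldsymbol 0,\boldsymbol \Omega)$ is independent of $\boldsymbol s$, and $s_1^2,\dots,s_p^2$ are i.i.d. $\text{gamma}(\text{shape } c, \text{rate } c)$ with $s_j>0$ (the SNG prior). Then for every $j\in\{1,\dots,p\}$ the marginal prior density of $\beta_j$ at $0$, $$p(\beta_j = 0 \mid c, \boldsymbol \Omega) = \int_{\mathbb{R}^{p-1}} \int_{(0,\infty)^p} \Big(\prod_{i=1}^p \frac{g_c(s_i)}{s_i}\Big)\phi_{\boldsymbol \Omega}(\boldsymbol b/\boldsymbol s)\, d\boldsymbol s\, d\boldsymbol b_{-j}\Big|_{b_j=0},$$ equals $+\infty$.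
   Context: $\phi_{\boldsymbol \Omega}$ denotes the $\text{normal}(\boldsymbol 0,\boldsymbol \Omega)$ density, $g_c(s)\propto s^{2c-1}e^{-cs^2}$ on $(0,\infty)$ is the density of $s_j$, $\boldsymbol b/\boldsymbol s$ is elementwise division, $\circ$ is the elementwise product, and $\boldsymbol b_{-j}$ denotes $\boldsymbol b$ with its $j$-th coordinate removed (the outer integral is over $\boldsymbol b_{-j}$ with $b_j=0$). *)

theory Defs
  imports "HOL-Analysis.Analysis"
begin

definition pos_def_mat :: "real^'n^'n \<Rightarrow> bool" where
  "pos_def_mat A \<longleftrightarrow> transpose A = A \<and> (\<forall>x. x \<noteq> 0 \<longrightarrow> x \<bullet> (A *v x) > 0)"

definition normal_density :: "real^'n^'n \<Rightarrow> real^'n \<Rightarrow> real" where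
  "normal_density Om x =
     exp (- (x \<bullet> (matrix_inv Om *v x)) / 2) / sqrt ((2 * pi) ^ CARD('n) * det Om)"

text \<open>Density g_c of s when s^2 ~ gamma(shape c, rate c), s > 0:
  g_c(s) = 2 c^c / Gamma(c) * s^(2c-1) * exp(-c s^2).\<close>
definition g_dens :: "real \<Rightarrow> real \<Rightarrow> real" where
  "g_dens c s = (if s > 0 then 2 * c powr c / Gamma c * s powr (2 * c - 1) * exp (- c * s\<^sup>2) else 0)"

definition sng_marginal_at_zero :: "real \<Rightarrow> real^'n^'n \<Rightarrow> 'n \<Rightarrow> ennreal" where
  "sng_marginal_at_zero c Om j =
     (\<integral>\<^sup>+ b. (\<integral>\<^sup>+ s. ennreal ((\<Prod>i\<in>UNIV. g_dens c (s i) / s i) *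
              normal_density Om (\<chi> i. (if i = j then 0 else b i) / s i))
          \<partial>(PiM UNIV (\<lambda>_. restrict_space lborel {0<..})))
      \<partial>(PiM (UNIV - {j}) (\<lambda>_. lborel)))"

end

theory Submission
  imports Defs
begin

lemma posdef_det_ne0:
  fixes A :: "real^'n^'n"
  assumes "\<forall>x. x \<noteq> 0 \<longrightarrow> x \<bullet> (A *v x) > 0"
  shows "det A \<noteq> 0"
proof -
  have "inj ((*v) A)"
  proof (rule injI)
    fix x y assume "A *v x = A *v y"
    then have "A *v (x - y) = 0" by (simp add: matrix_vector_mult_diff_distrib)
    then show "x = y" using assms[rule_format, of "x - y"] by auto
  qed
  then show ?thesis using det_nz_iff_inj[of "(*v) A"] by (simp add: matrix_vector_mul_linear)
qed

lemma posdef_det_pos: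
  fixes Om :: "real^'n^'n"
  assumes "pos_def_mat Om"
  shows "det Om > 0"
proof (rule ccontr)
  assume "\<not> det Om > 0"
  define M where "M t = (\<chi> i k. (1 - t) * (mat 1 :: real^'n^'n) $ i $ k + t * Om $ i $ k)" for t :: real
  have M1: "M 1 = Om" unfolding M_def by (simp add: vec_eq_iff)
  have M0: "M 0 = mat 1" unfolding M_def by (simp add: vec_eq_iff)
  have Mv: "M t *v x = (1 - t) *\<^sub>R x + t *\<^sub>R (Om *v x)" for t x
  proof -
    have "(\<Sum>k\<in>UNIV. ((1 - t) * (if i = k then 1 else 0) + t * Om $ i $ k) * x $ k) =
         (1 - t) * x $ i + (\<Sum>k\<in>UNIV. t * (Om $ i $ k * x $ k))" for i
      by (simp add: distrib_right sum.distrib mult.assoc if_distrib[of "\<lambda>z. z * _"] sum_distrib_left[symmetric] cong: if_cong)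
    then show ?thesis
      unfolding M_def by (simp add: vec_eq_iff matrix_vector_mult_def sum_distrib_left mat_def)
  qed
  have pd: "x \<noteq> 0 \<Longrightarrow> x \<bullet> (M t *v x) > 0" if "0 \<le> t" "t \<le> 1" for t x
  proof -
    assume x: "x \<noteq> 0"
    have "x \<bullet> (M t *v x) = (1 - t) * (x \<bullet> x) + t * (x \<bullet> (Om *v x))"
      by (simp add: Mv inner_add_right)
    moreover have "x \<bullet> x > 0" using x by simp
    moreover have "x \<bullet> (Om *v x) > 0" using assms x unfolding pos_def_mat_def by auto
    ultimately show ?thesis using that
    proof (cases "t = 0")
      case False
      then have "t * (x \<bullet> (Om *v x)) > 0" "(1 - t) * (x \<bullet> x) \<ge> 0"
        using \<open>x \<bullet> (Om *v x) > 0\<close> \<open>x \<bullet> x > 0\<close> that by auto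
      then show ?thesis using \<open>x \<bullet> (M t *v x) = _\<close> by linarith
    qed auto
  qed
  have cont: "continuous_on {0..1} (\<lambda>t. det (M t))"
    unfolding det_def M_def by (intro continuous_intros)
  obtain t where t: "t \<in> {0..1}" "det (M t) = 0"
    using IVT2'[of "\<lambda>t. det (M t)" 1 0 0] cont M0 M1 \<open>\<not> det Om > 0\<close> by force
  then show False using posdef_det_ne0[of "M t"] pd by auto
qed

lemma int_inv_top:
  fixes A :: real
  assumes A: "A > 0"
  shows "(\<integral>\<^sup>+ t. ennreal (A / t * indicator {0<..1} t) \<partial>restrict_space lborel {0<..}) = top"
proof -
  define X where "X = (\<integral>\<^sup>+ t. ennreal (A / t * indicator {0<..1} t) \<partial>restrict_space lborel {0<..})"
  have X: "X = (\<integral>\<^sup>+ t. ennreal (A / t * indicator {0<..1} t) * indicator {0<..} t \<partial>lborel)"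
    unfolding X_def by (rule nn_integral_restrict_space) simp
  have ge: "ennreal (- A * ln e) \<le> X" if e: "0 < e" "e \<le> 1" for e :: real
  proof -
    have eq: "(\<integral>\<^sup>+t. ennreal (A / t) * indicator {e .. 1} t \<partial>lborel) = ennreal (A * ln 1 - A * ln e)"
    proof (rule nn_integral_FTC_Icc)
      fix x assume x: "x \<in> {e..1}"
      then have "x > 0" using e by auto
      then show "DERIV (\<lambda>t. A * ln t) x :> A / x"
        by (auto intro!: derivative_eq_intros)
      show "0 \<le> A / x" using \<open>x > 0\<close> A by simp
    qed (use e in auto)
    have "(\<integral>\<^sup>+t. ennreal (A / t) * indicator {e .. 1} t \<partial>lborel) \<le> X" unfolding X
      by (intro nn_integral_mono) (use e in \<open>auto simp: indicator_def\<close>)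
    then show ?thesis using eq by simp
  qed
  show ?thesis
  proof (rule ccontr)
    assume "\<not> ?thesis"
    then have "X < top" unfolding X_def using top.not_eq_extremum by blast
    then obtain n where n: "X < of_nat n" using ennreal_Ex_less_of_nat by blast
    have "ennreal (- A * ln (exp (- real n / A))) \<le> X" by (rule ge) (use A in auto)
    also have "- A * ln (exp (- real n / A)) = real n" using A by simp
    finally show False using n by (simp add: ennreal_of_nat_eq_real_of_nat)
  qed
qed

lemma inner_top:
  fixes Om :: "real^'n^'n" and b :: "'n \<Rightarrow> real" and j :: 'n
  assumes det: "det Om > 0" and c: "0 < c" "c < 1/2"
  shows "(\<integral>\<^sup>+ s. ennreal ((\<Prod>i\<in>UNIV. g_dens c (s i) / s i) *
              normal_density Om (\<chi> i. (if i = j then 0 else b i) / s i))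
          \<partial>(PiM UNIV (\<lambda>_. restrict_space lborel {0<..}))) = top"
proof -
  define K where "K = 2 * c powr c / Gamma c"
  have K: "K > 0" unfolding K_def using c by (simp add: Gamma_real_pos)
  have gK: "g_dens c t = K * t powr (2*c-1) * exp (-c*t\<^sup>2)" if "t > 0" for t
    using that by (simp add: g_dens_def K_def)
  define A where "A = K * exp (-c)"
  define C where "C = K * 2 powr (2*c-1) * exp (-4*c) / 2"
  have A: "A > 0" and C: "C > 0" using K by (auto simp: A_def C_def)
  have gA: "A / t \<le> g_dens c t / t" if t: "0 < t" "t \<le> 1" for t
  proof -
    have "1 powr (2*c-1) \<le> t powr (2*c-1)" by (rule powr_mono2') (use c t in auto)
    then have p: "1 \<le> t powr (2*c-1)" by simp
    have "t\<^sup>2 \<le> 1" using t by (simp add: power_le_one)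
    then have e: "exp (-c) \<le> exp (-c*t\<^sup>2)" using c by simp
    have "A \<le> K * t powr (2*c-1) * exp (-c*t\<^sup>2)"
      unfolding A_def using K p e
      by (metis mult.commute mult_left_mono mult_mono exp_ge_zero less_le mult_1_right order.trans zero_le_one)
    then show ?thesis using t gK by (simp add: divide_right_mono)
  qed
  have gC: "C \<le> g_dens c t / t" if t: "1 \<le> t" "t \<le> 2" for t
  proof -
    have p: "2 powr (2*c-1) \<le> t powr (2*c-1)" by (rule powr_mono2') (use c t in auto)
    have "t\<^sup>2 \<le> 2\<^sup>2" by (rule power_mono) (use t in auto)
    then have "t\<^sup>2 \<le> 4" by simp
    then have e: "exp (-4*c) \<le> exp (-c*t\<^sup>2)" using c by simp
    have "K * 2 powr (2*c-1) * exp (-4*c) \<le> K * t powr (2*c-1) * exp (-c*t\<^sup>2)"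
      using K p e by (intro mult_mono mult_left_mono) auto
    then have "K * 2 powr (2*c-1) * exp (-4*c) / 2 \<le> K * t powr (2*c-1) * exp (-c*t\<^sup>2) / t"
      using t K by (intro frac_le) auto
    then show ?thesis using t gK unfolding C_def by simp
  qed
  obtain B where B: "B > 0" "\<And>x. norm (matrix_inv Om *v x) \<le> norm x * B"
    using bounded_linear.pos_bounded[OF matrix_vector_mul_bounded_linear[of "matrix_inv Om"]] by blast
  define R where "R = (\<Sum>i\<in>UNIV. \<bar>if i = j then 0 else b i\<bar>)"
  have R: "R \<ge> 0" unfolding R_def by (intro sum_nonneg) auto
  define D where "D = sqrt ((2*pi)^CARD('n) * det Om)"
  have D: "D > 0" unfolding D_def using det by simp
  define \<delta> where "\<delta> = exp (- (R * (R * B)) / 2) / D"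
  have \<delta>: "\<delta> > 0" unfolding \<delta>_def using D by simp
  have phi: "\<delta> \<le> normal_density Om (\<chi> i. (if i = j then 0 else b i) / s i)"
    if s: "\<And>i. i \<noteq> j \<Longrightarrow> 1 \<le> s i" for s :: "'n \<Rightarrow> real"
  proof -
    define x where "x = (\<chi> i. (if i = j then 0 else b i) / s i)"
    have xi: "\<bar>x $ i\<bar> \<le> \<bar>if i = j then 0 else b i\<bar>" for i
    proof (cases "i = j")
      case False
      have "\<bar>b i\<bar> * 1 \<le> \<bar>b i\<bar> * s i" using s[of i] False by (intro mult_left_mono) auto
      then have "\<bar>b i\<bar> / s i \<le> \<bar>b i\<bar>" using s[of i] False by (simp add: divide_le_eq)
      then show ?thesis using False s[of i] by (simp add: x_def abs_div)
    qed (simp add: x_def)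
    have nx: "norm x \<le> R"
      using norm_le_l1_cart[of x] sum_mono[of UNIV "\<lambda>i. \<bar>x $ i\<bar>", OF xi] unfolding R_def by linarith
    have "x \<bullet> (matrix_inv Om *v x) \<le> norm x * norm (matrix_inv Om *v x)" by (rule norm_cauchy_schwarz)
    also have "\<dots> \<le> norm x * (norm x * B)" using B(2)[of x] by (simp add: mult_left_mono)
    also have "\<dots> \<le> R * (R * B)" using nx B(1) R by (intro mult_mono) auto
    finally have q: "x \<bullet> (matrix_inv Om *v x) \<le> R * (R * B)" .
    have "exp (- (R * (R * B)) / 2) \<le> exp (- (x \<bullet> (matrix_inv Om *v x)) / 2)" using q by simp
    then show ?thesis unfolding \<delta>_def normal_density_def x_def[symmetric] D_def[symmetric]
      using D by (simp add: divide_right_mono)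
  qed
  define h where "h i t = (if i = j then A / t * indicator {0<..1} t else C * indicator {1..2} t)"
    for i :: 'n and t :: real
  have h0: "0 \<le> h i t" for i t unfolding h_def using A C by (auto simp: indicator_def)
  let ?M = "PiM UNIV (\<lambda>_::'n. restrict_space lborel ({0<..} :: real set))"
  let ?F = "\<lambda>s. ennreal ((\<Prod>i\<in>UNIV. g_dens c (s i) / s i) *
              normal_density Om (\<chi> i. (if i = j then 0 else b i) / s i))"
  have pw: "ennreal \<delta> * (\<Prod>i\<in>UNIV. ennreal (h i (s i))) \<le> ?F s" if "s \<in> space ?M" for s
  proof -
    have spos: "s i > 0" for i using that by (auto simp: space_PiM space_restrict_space)
    show ?thesis
    proof (cases "\<forall>i. h i (s i) \<noteq> 0")
      case True
      have hg: "h i (s i) \<le> g_dens c (s i) / s i" for i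
        using True[rule_format, of i] gA[of "s i"] gC[of "s i"] unfolding h_def
        by (auto simp: indicator_def split: if_splits)
      have s1: "1 \<le> s i" if "i \<noteq> j" for i
        using True[rule_format, of i] that unfolding h_def by (auto simp: indicator_def split: if_splits)
      have "(\<Prod>i\<in>UNIV. h i (s i)) \<le> (\<Prod>i\<in>UNIV. g_dens c (s i) / s i)"
        by (intro prod_mono) (use h0 hg in auto)
      moreover have "0 \<le> (\<Prod>i\<in>UNIV. h i (s i))" by (intro prod_nonneg) (use h0 in auto)
      ultimately have "\<delta> * (\<Prod>i\<in>UNIV. h i (s i)) \<le> normal_density Om (\<chi> i. (if i = j then 0 else b i) / s i) * (\<Prod>i\<in>UNIV. g_dens c (s i) / s i)"
        using phi[of s] s1 \<delta> by (intro mult_mono) auto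
      then show ?thesis
        by (simp add: prod_ennreal h0 ennreal_mult[symmetric] \<delta>[THEN less_imp_le] prod_nonneg mult.commute
            ennreal_leI)
    next
      case False
      then obtain i where "h i (s i) = 0" by auto
      then have z: "(\<Prod>i\<in>UNIV. ennreal (h i (s i))) = 0" by (auto intro!: exI[of _ i])
      show ?thesis by (simp only: z mult_zero_right zero_le)
    qed
  qed
  interpret P: product_sigma_finite "\<lambda>_::'n. restrict_space lborel ({0<..} :: real set)"
    by (simp add: product_sigma_finite_def sigma_finite_measure_restrict_space sigma_finite_lborel)
  have hm: "(\<lambda>t. ennreal (h i t)) \<in> borel_measurable (restrict_space lborel {0<..})" for i
    by (rule measurable_restrict_space1) (unfold h_def, measurable)
  have hm2: "(\<lambda>s. ennreal (h i (s i))) \<in> borel_measurable ?M" for i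
    using measurable_compose[OF measurable_component_singleton[of i UNIV "\<lambda>_. restrict_space lborel ({0<..}::real set)"] hm[of i]]
    by simp
  have int_h: "(\<integral>\<^sup>+ s. (\<Prod>i\<in>UNIV. ennreal (h i (s i))) \<partial>?M) =
      (\<Prod>i\<in>UNIV. \<integral>\<^sup>+ t. ennreal (h i t) \<partial>restrict_space lborel {0<..})"
    by (rule P.product_nn_integral_prod) (auto intro: hm)
  have hj: "(\<integral>\<^sup>+ t. ennreal (h j t) \<partial>restrict_space lborel {0<..}) = top"
    unfolding h_def using int_inv_top[OF A] by simp
  have hi: "(\<integral>\<^sup>+ t. ennreal (h i t) \<partial>restrict_space lborel {0<..}) = ennreal C" if "i \<noteq> j" for i
  proof -
    have "(\<integral>\<^sup>+ t. ennreal (h i t) \<partial>restrict_space lborel {0<..}) =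
          (\<integral>\<^sup>+ t. ennreal (h i t) * indicator {0<..} t \<partial>lborel)"
      by (rule nn_integral_restrict_space) simp
    also have "\<dots> = (\<integral>\<^sup>+ t. ennreal C * indicator {1..2::real} t \<partial>lborel)"
      using that by (intro nn_integral_cong) (auto simp: h_def indicator_def)
    also have "\<dots> = ennreal C" by (subst nn_integral_cmult_indicator) auto
    finally show ?thesis .
  qed
  have prod_top: "(\<Prod>i\<in>UNIV. \<integral>\<^sup>+ t. ennreal (h i t) \<partial>restrict_space lborel {0<..}) = top"
  proof -
    have "(\<integral>\<^sup>+ t. ennreal (h i t) \<partial>restrict_space lborel {0<..}) \<noteq> 0" for i
      using hj hi[of i] C by (cases "i = j") auto
    then show ?thesis unfolding ennreal_prod_eq_top using hj by auto
  qed
  have "top = ennreal \<delta> * (\<integral>\<^sup>+ s. (\<Prod>i\<in>UNIV. ennreal (h i (s i))) \<partial>?M)"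
    using \<delta> by (simp add: int_h prod_top ennreal_mult_top)
  also have "\<dots> = (\<integral>\<^sup>+ s. ennreal \<delta> * (\<Prod>i\<in>UNIV. ennreal (h i (s i))) \<partial>?M)"
    by (rule nn_integral_cmult[symmetric])
      (intro borel_measurable_prod_ennreal hm2)
  also have "\<dots> \<le> (\<integral>\<^sup>+ s. ?F s \<partial>?M)" by (rule nn_integral_mono) (rule pw)
  finally show ?thesis by (simp add: top_unique)
qed

theorem proposition2p4:
  fixes Om :: "real^'n^'n" and c :: real and j :: 'n
  assumes "pos_def_mat Om" and "0 < c" and "c < 1/2"
  shows "sng_marginal_at_zero c Om j = \<infinity>"
proof -
  have det: "det Om > 0" using posdef_det_pos[OF assms(1)] .
  interpret L: product_sigma_finite "\<lambda>_::'n. lborel :: real measure"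
    by (simp add: product_sigma_finite_def sigma_finite_lborel)
  have sp: "emeasure (PiM (UNIV - {j}) (\<lambda>_::'n. lborel :: real measure)) (space (PiM (UNIV - {j}) (\<lambda>_::'n. lborel :: real measure)))
      = (\<Prod>i\<in>UNIV - {j}. emeasure (lborel :: real measure) UNIV)"
    unfolding space_PiM by (subst L.emeasure_PiM) auto
  have "sng_marginal_at_zero c Om j = (\<integral>\<^sup>+ b. top \<partial>(PiM (UNIV - {j}) (\<lambda>_::'n. lborel :: real measure)))"
    unfolding sng_marginal_at_zero_def by (simp only: inner_top[OF det assms(2,3)])
  also have "\<dots> = top" by (simp add: sp ennreal_top_mult)
  finally show ?thesis by simp
qed

end
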